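(* The variety $\mathcal{WHB}$ of WHB-algebras, and hence each of its subvarieties, has the congruence extension property: whenever $\mathbf A$ is a subalgebra of a WHB-algebra $\mathbf B$ (in the variety in question) and $\delta$ is a congruence of $\mathbf A$, there is a congruence $\theta$ of $\mathbf B$ with $\delta=\theta\cap A^2$.
   Context: A WHB-algebra is an algebra $(A,\wedge,\vee,\to,\leftarrow,0,1)$ such that $(A,\wedge,\vee,0,1)$ is a bounded distributive lattice and for all $a,b,c\in A$: $a\to a=1$; $a\to(b\wedge c)=(a\to b)\wedge(a\to c)$; $(a\vee b)\to c=(a\to c)\wedge(b\to c)$; $(a\to b)\wedge(b\to c)\le a\to c$; $a\leftarrow a=0$; $(a\vee b)\leftarrow c=(a\leftarrow c)\vee(b\leftarrow c)$; $a\leftarrow(b\wedge c)=(a\leftarrow b)\vee(a\leftarrow c)$; $a\leftarrow c\le(a\leftarrow b)\vee(b\leftarrow c)$; $a\wedge((a\to b)\leftarrow 0)\le b$; $a\le b\vee(1\to(a\leftarrow b))$. *)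

theory Defs
  imports Main
begin

record 'a whb_alg =
  carrier :: "'a set"
  mt :: "'a \<Rightarrow> 'a \<Rightarrow> 'a"
  jn :: "'a \<Rightarrow> 'a \<Rightarrow> 'a"
  imp :: "'a \<Rightarrow> 'a \<Rightarrow> 'a"
  coimp :: "'a \<Rightarrow> 'a \<Rightarrow> 'a"
  bot :: "'a"
  top :: "'a"

definition whb_le :: "('a, 'b) whb_alg_scheme \<Rightarrow> 'a \<Rightarrow> 'a \<Rightarrow> bool" where
  "whb_le B a b \<longleftrightarrow> mt B a b = a"

definition WHB_algebra :: "('a, 'b) whb_alg_scheme \<Rightarrow> bool" where
  "WHB_algebra B \<longleftrightarrow>
    (let A = carrier B; m = mt B; j = jn B; i = imp B; c = coimp B; z = bot B; u = top B;
         le = whb_le B in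
     \<comment> \<open>closure\<close>
     z \<in> A \<and> u \<in> A \<and>
     (\<forall>a\<in>A. \<forall>b\<in>A. m a b \<in> A \<and> j a b \<in> A \<and> i a b \<in> A \<and> c a b \<in> A) \<and>
     \<comment> \<open>bounded distributive lattice\<close>
     (\<forall>a\<in>A. \<forall>b\<in>A. \<forall>d\<in>A.
        m (m a b) d = m a (m b d) \<and> j (j a b) d = j a (j b d) \<and>
        m a b = m b a \<and> j a b = j b a \<and>
        m a (j a b) = a \<and> j a (m a b) = a \<and>
        m a (j b d) = j (m a b) (m a d)) \<and>
     (\<forall>a\<in>A. m a z = z \<and> j a u = u) \<and>
     \<comment> \<open>WHB axioms\<close>
     (\<forall>a\<in>A. \<forall>b\<in>A. \<forall>d\<in>A.
        i a a = u \<and>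
        i a (m b d) = m (i a b) (i a d) \<and>
        i (j a b) d = m (i a d) (i b d) \<and>
        le (m (i a b) (i b d)) (i a d) \<and>
        c a a = z \<and>
        c (j a b) d = j (c a d) (c b d) \<and>
        c a (m b d) = j (c a b) (c a d) \<and>
        le (c a d) (j (c a b) (c b d)) \<and>
        le (m a (c (i a b) z)) b \<and>
        le a (j b (i u (c a b)))))"

definition subuniverse :: "'a set \<Rightarrow> ('a, 'b) whb_alg_scheme \<Rightarrow> bool" where
  "subuniverse A B \<longleftrightarrow> A \<subseteq> carrier B \<and> bot B \<in> A \<and> top B \<in> A \<and>
     (\<forall>a\<in>A. \<forall>b\<in>A. mt B a b \<in> A \<and> jn B a b \<in> A \<and> imp B a b \<in> A \<and> coimp B a b \<in> A)"

definition congruence_on :: "'a set \<Rightarrow> ('a, 'b) whb_alg_scheme \<Rightarrow> ('a \<times> 'a) set \<Rightarrow> bool" where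
  "congruence_on A B \<delta> \<longleftrightarrow> equiv A \<delta> \<and>
     (\<forall>a b a' b'. (a, a') \<in> \<delta> \<longrightarrow> (b, b') \<in> \<delta> \<longrightarrow>
        (mt B a b, mt B a' b') \<in> \<delta> \<and> (jn B a b, jn B a' b') \<in> \<delta> \<and>
        (imp B a b, imp B a' b') \<in> \<delta> \<and> (coimp B a b, coimp B a' b') \<in> \<delta>)"

end

theory Submission
  imports Defs
begin

locale dlat =
  fixes C :: "'a set" and m j :: "'a \<Rightarrow> 'a \<Rightarrow> 'a" and z u :: 'a
  assumes z_in: "z \<in> C" and u_in: "u \<in> C"
    and m_in: "\<And>a b. a \<in> C \<Longrightarrow> b \<in> C \<Longrightarrow> m a b \<in> C"
    and j_in: "\<And>a b. a \<in> C \<Longrightarrow> b \<in> C \<Longrightarrow> j a b \<in> C"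
    and m_assoc: "\<And>a b d. a \<in> C \<Longrightarrow> b \<in> C \<Longrightarrow> d \<in> C \<Longrightarrow> m (m a b) d = m a (m b d)"
    and j_assoc: "\<And>a b d. a \<in> C \<Longrightarrow> b \<in> C \<Longrightarrow> d \<in> C \<Longrightarrow> j (j a b) d = j a (j b d)"
    and m_comm: "\<And>a b. a \<in> C \<Longrightarrow> b \<in> C \<Longrightarrow> m a b = m b a"
    and j_comm: "\<And>a b. a \<in> C \<Longrightarrow> b \<in> C \<Longrightarrow> j a b = j b a"
    and absorb1: "\<And>a b. a \<in> C \<Longrightarrow> b \<in> C \<Longrightarrow> m a (j a b) = a"
    and absorb2: "\<And>a b. a \<in> C \<Longrightarrow> b \<in> C \<Longrightarrow> j a (m a b) = a"
    and distr: "\<And>a b d. a \<in> C \<Longrightarrow> b \<in> C \<Longrightarrow> d \<in> C \<Longrightarrow> m a (j b d) = j (m a b) (m a d)"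
    and m_z: "\<And>a. a \<in> C \<Longrightarrow> m a z = z"
    and j_u: "\<And>a. a \<in> C \<Longrightarrow> j a u = u"
begin

definition le where "le a b \<longleftrightarrow> m a b = a"

definition primeF where
  "primeF Q \<longleftrightarrow> Q \<subseteq> C \<and> u \<in> Q \<and> z \<notin> Q \<and> (\<forall>a\<in>Q. \<forall>b\<in>C. le a b \<longrightarrow> b \<in> Q)
     \<and> (\<forall>a\<in>Q. \<forall>b\<in>Q. m a b \<in> Q) \<and> (\<forall>a\<in>C. \<forall>b\<in>C. j a b \<in> Q \<longrightarrow> a \<in> Q \<or> b \<in> Q)"

lemma m_idem: "a \<in> C \<Longrightarrow> m a a = a"
  by (metis absorb1 absorb2 m_in)

lemma j_idem: "a \<in> C \<Longrightarrow> j a a = a"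
  by (metis absorb1 absorb2 j_in)

lemma le_j: "a \<in> C \<Longrightarrow> b \<in> C \<Longrightarrow> le a b \<longleftrightarrow> j a b = b"
  unfolding le_def by (metis absorb1 absorb2 j_comm m_comm)

lemma le_refl: "a \<in> C \<Longrightarrow> le a a" by (simp add: le_def m_idem)

lemma le_trans: "a \<in> C \<Longrightarrow> b \<in> C \<Longrightarrow> d \<in> C \<Longrightarrow> le a b \<Longrightarrow> le b d \<Longrightarrow> le a d"
  unfolding le_def by (metis m_assoc)

lemma le_m1: "a \<in> C \<Longrightarrow> b \<in> C \<Longrightarrow> le (m a b) a"
  unfolding le_def by (metis m_assoc m_comm m_idem)

lemma le_m2: "a \<in> C \<Longrightarrow> b \<in> C \<Longrightarrow> le (m a b) b"
  unfolding le_def by (metis m_assoc m_idem)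

lemma le_j1: "a \<in> C \<Longrightarrow> b \<in> C \<Longrightarrow> le a (j a b)"
  unfolding le_def by (metis absorb1)

lemma le_j2: "a \<in> C \<Longrightarrow> b \<in> C \<Longrightarrow> le b (j a b)"
  unfolding le_def by (metis absorb1 j_comm)

lemma le_z: "a \<in> C \<Longrightarrow> le z a"
  unfolding le_def by (metis m_comm m_z z_in)

lemma le_u: "a \<in> C \<Longrightarrow> le a u"
  using le_j j_comm j_u u_in by metis

lemma le_meet: "a \<in> C \<Longrightarrow> b \<in> C \<Longrightarrow> d \<in> C \<Longrightarrow> le d a \<Longrightarrow> le d b \<Longrightarrow> le d (m a b)"
  unfolding le_def by (metis m_assoc)

lemma distr2: "a \<in> C \<Longrightarrow> b \<in> C \<Longrightarrow> d \<in> C \<Longrightarrow> m (j b d) a = j (m b a) (m d a)"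
  by (metis distr j_in m_comm)

lemma m_mono1: "a \<in> C \<Longrightarrow> b \<in> C \<Longrightarrow> d \<in> C \<Longrightarrow> le a b \<Longrightarrow> le (m a d) (m b d)"
  unfolding le_def by (metis m_assoc m_comm m_idem m_in)

lemma T_prime:
  assumes leT: "\<And>a b. a \<in> C \<Longrightarrow> b \<in> C \<Longrightarrow> le a b \<Longrightarrow> T a b"
    and trT: "\<And>a b d. a \<in> C \<Longrightarrow> b \<in> C \<Longrightarrow> d \<in> C \<Longrightarrow> T a b \<Longrightarrow> T b d \<Longrightarrow> T a d"
    and mT: "\<And>a b d. a \<in> C \<Longrightarrow> b \<in> C \<Longrightarrow> d \<in> C \<Longrightarrow> T a b \<Longrightarrow> T a d \<Longrightarrow> T a (m b d)"
    and jT: "\<And>a b d. a \<in> C \<Longrightarrow> b \<in> C \<Longrightarrow> d \<in> C \<Longrightarrow> T a d \<Longrightarrow> T b d \<Longrightarrow> T (j a b) d"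
    and x: "x \<in> C" and y: "y \<in> C" and nT: "\<not> T x y"
  shows "\<exists>Q. primeF Q \<and> x \<in> Q \<and> y \<notin> Q \<and> (\<forall>a\<in>Q. \<forall>b\<in>C. T a b \<longrightarrow> b \<in> Q)"
proof -
  define F where "F = {G. G \<subseteq> C \<and> x \<in> G \<and> y \<notin> G \<and> (\<forall>a\<in>G. \<forall>b\<in>C. T a b \<longrightarrow> b \<in> G)
      \<and> (\<forall>a\<in>G. \<forall>b\<in>G. m a b \<in> G)}"
  define G0 where "G0 = {b \<in> C. T x b}"
  have g1: "G0 \<subseteq> C" unfolding G0_def by blast
  have g2: "x \<in> G0" unfolding G0_def using x leT le_refl by blast
  have g3: "y \<notin> G0" unfolding G0_def using nT by blast
  have g4: "\<forall>a\<in>G0. \<forall>b\<in>C. T a b \<longrightarrow> b \<in> G0" unfolding G0_def using trT[of x] x by blast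
  have g5: "\<forall>a\<in>G0. \<forall>b\<in>G0. m a b \<in> G0" unfolding G0_def using mT[of x] x m_in by blast
  have G0F: "G0 \<in> F" unfolding F_def using g1 g2 g3 g4 g5 by blast
  have "\<exists>M\<in>F. \<forall>X\<in>F. M \<subseteq> X \<longrightarrow> X = M"
  proof (rule subset_Zorn_nonempty)
    show "F \<noteq> {}" using G0F by blast
    fix K assume K: "K \<noteq> {}" "subset.chain F K"
    have KF: "G \<subseteq> C \<and> x \<in> G \<and> y \<notin> G \<and> (\<forall>a\<in>G. \<forall>b\<in>C. T a b \<longrightarrow> b \<in> G) \<and> (\<forall>a\<in>G. \<forall>b\<in>G. m a b \<in> G)"
      if "G \<in> K" for G
    proof -
      have "G \<in> F" using K(2) that unfolding subset.chain_def by blast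
      then show ?thesis unfolding F_def by blast
    qed
    have ch: "G1 \<subseteq> G2 \<or> G2 \<subseteq> G1" if "G1 \<in> K" "G2 \<in> K" for G1 G2
      using K(2) that unfolding subset.chain_def by blast
    obtain G where "G \<in> K" using K(1) by blast
    have u1: "\<Union>K \<subseteq> C" using KF by blast
    have u2: "x \<in> \<Union>K" using KF \<open>G \<in> K\<close> by blast
    have u3: "y \<notin> \<Union>K" using KF by blast
    have u4: "\<forall>a\<in>\<Union>K. \<forall>b\<in>C. T a b \<longrightarrow> b \<in> \<Union>K"
    proof (intro ballI impI)
      fix a b assume "a \<in> \<Union>K" "b \<in> C" "T a b"
      then obtain G1 where "G1 \<in> K" "a \<in> G1" by blast
      then have "b \<in> G1" using KF[of G1] \<open>b \<in> C\<close> \<open>T a b\<close> by blast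
      then show "b \<in> \<Union>K" using \<open>G1 \<in> K\<close> by blast
    qed
    have u5: "\<forall>a\<in>\<Union>K. \<forall>b\<in>\<Union>K. m a b \<in> \<Union>K"
    proof (intro ballI)
      fix a b assume "a \<in> \<Union>K" "b \<in> \<Union>K"
      then obtain G1 G2 where g: "G1 \<in> K" "G2 \<in> K" "a \<in> G1" "b \<in> G2" by blast
      have "m a b \<in> G2" if "G1 \<subseteq> G2" using that g KF[of G2] by blast
      moreover have "m a b \<in> G1" if "G2 \<subseteq> G1" using that g KF[of G1] by blast
      ultimately show "m a b \<in> \<Union>K" using ch[OF g(1,2)] g(1,2) by blast
    qed
    show "\<Union>K \<in> F" unfolding F_def using u1 u2 u3 u4 u5 by blast
  qed
  then obtain M where MF: "M \<in> F" and Mmax: "\<And>X. X \<in> F \<Longrightarrow> M \<subseteq> X \<Longrightarrow> X = M" by blast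
  have MC: "M \<subseteq> C" and xM: "x \<in> M" and yM: "y \<notin> M"
    and Mcl: "\<And>a b. a \<in> M \<Longrightarrow> b \<in> C \<Longrightarrow> T a b \<Longrightarrow> b \<in> M"
    and Mm: "\<And>a b. a \<in> M \<Longrightarrow> b \<in> M \<Longrightarrow> m a b \<in> M"
    using MF unfolding F_def by blast+
  have Mup: "\<And>a b. a \<in> M \<Longrightarrow> b \<in> C \<Longrightarrow> le a b \<Longrightarrow> b \<in> M"
    using Mcl leT MC by blast
  have key: "\<exists>g\<in>M. T (m g c) y" if c: "c \<in> C" "c \<notin> M" for c
  proof (rule ccontr)
    assume na: "\<not> (\<exists>g\<in>M. T (m g c) y)"
    define H where "H = {e \<in> C. \<exists>g\<in>M. T (m g c) e}"
    have "H \<in> F"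
      unfolding F_def
    proof (intro CollectI conjI ballI impI)
      show "H \<subseteq> C" unfolding H_def by blast
      show "x \<in> H" unfolding H_def using xM x c MC leT le_m1 m_in by blast
      show "y \<notin> H" unfolding H_def using na by blast
      fix a b assume "a \<in> H" "b \<in> C" "T a b"
      then show "b \<in> H" unfolding H_def using trT MC c m_in by blast
    next
      fix a b assume "a \<in> H" "b \<in> H"
      then obtain g1 g2 where g: "g1 \<in> M" "g2 \<in> M" "T (m g1 c) a" "T (m g2 c) b" "a \<in> C" "b \<in> C"
        unfolding H_def by blast
      have g12: "m g1 g2 \<in> M" using Mm g by blast
      have C3: "g1 \<in> C" "g2 \<in> C" "m g1 g2 \<in> C" using g MC m_in by auto
      have "le (m (m g1 g2) c) (m g1 c)" using m_mono1 le_m1 C3 c by blast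
      then have t1: "T (m (m g1 g2) c) a" using trT leT C3 c m_in g by meson
      have "le (m (m g1 g2) c) (m g2 c)" using m_mono1 le_m2 C3 c by blast
      then have t2: "T (m (m g1 g2) c) b" using trT leT C3 c m_in g by meson
      have "T (m (m g1 g2) c) (m a b)" using mT t1 t2 C3 c m_in g by blast
      then show "m a b \<in> H" unfolding H_def using g12 g m_in by blast
    qed
    moreover have "M \<subseteq> H"
    proof
      fix a assume "a \<in> M"
      then show "a \<in> H" unfolding H_def using MC c leT le_m1 m_in by blast
    qed
    ultimately have "H = M" using Mmax by blast
    moreover have "c \<in> H" unfolding H_def using xM MC c leT le_m2 m_in by blast
    ultimately show False using c by blast
  qed
  have prime: "a \<in> M \<or> b \<in> M" if ab: "a \<in> C" "b \<in> C" "j a b \<in> M" for a b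
  proof (rule ccontr)
    assume "\<not> (a \<in> M \<or> b \<in> M)"
    then obtain g1 g2 where g: "g1 \<in> M" "g2 \<in> M" "T (m g1 a) y" "T (m g2 b) y"
      using key ab by blast
    define h where "h = m g1 g2"
    have hM: "h \<in> M" using Mm g h_def by blast
    have C3: "g1 \<in> C" "g2 \<in> C" "h \<in> C" using g MC hM by auto
    have t1: "T (m h a) y" using trT leT m_mono1 le_m1 C3 ab g(3) m_in y h_def by meson
    have t2: "T (m h b) y" using trT leT m_mono1 le_m2 C3 ab g(4) m_in y h_def by meson
    have "T (j (m h a) (m h b)) y" using jT t1 t2 C3 ab m_in y by blast
    then have "T (m h (j a b)) y" using distr C3 ab by simp
    moreover have "m h (j a b) \<in> M" using Mm hM ab by blast
    ultimately show False using Mcl y yM by blast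
  qed
  have "u \<in> M" using Mup xM x le_u u_in by blast
  moreover have "z \<notin> M" using Mup le_z y yM by blast
  ultimately have "primeF M" unfolding primeF_def using MC Mup Mm prime by blast
  then show ?thesis using xM yM Mcl by blast
qed


lemma m_ac: "a \<in> C \<Longrightarrow> b \<in> C \<Longrightarrow> d \<in> C \<Longrightarrow> m (m a b) (m a d) = m a (m b d)"
proof -
  assume C: "a \<in> C" "b \<in> C" "d \<in> C"
  have "m (m a b) (m a d) = m a (m b (m a d))" using m_assoc[of a b "m a d"] C m_in by simp
  also have "m b (m a d) = m (m b a) d" using m_assoc[of b a d] C by simp
  also have "m b a = m a b" using m_comm[of b a] C by simp
  also have "m (m a b) d = m a (m b d)" using m_assoc[of a b d] C by simp
  also have "m a (m a (m b d)) = m (m a a) (m b d)" using m_assoc[of a a "m b d"] C m_in by simp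
  also have "m a a = a" using m_idem C by simp
  finally show ?thesis .
qed

lemma le_antisym: "le a b \<Longrightarrow> le b a \<Longrightarrow> a \<in> C \<Longrightarrow> b \<in> C \<Longrightarrow> a = b"
  unfolding le_def using m_comm[of a b] by simp

lemma le_trans3: "a \<in> C \<Longrightarrow> b \<in> C \<Longrightarrow> d \<in> C \<Longrightarrow> e \<in> C \<Longrightarrow> le a b \<Longrightarrow> le b d \<Longrightarrow> le d e \<Longrightarrow> le a e"
  using le_trans[of a b d] le_trans[of a d e] by blast

lemma m_u: "a \<in> C \<Longrightarrow> m u a = a" using le_u[of a] m_comm[of a u] u_in unfolding le_def by simp
lemma j_z: "a \<in> C \<Longrightarrow> j a z = a" using le_z[of a] le_j[of z a] j_comm[of a z] z_in by simp

lemma le_join: "a \<in> C \<Longrightarrow> b \<in> C \<Longrightarrow> d \<in> C \<Longrightarrow> le a d \<Longrightarrow> le b d \<Longrightarrow> le (j a b) d"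
proof -
  assume C: "a \<in> C" "b \<in> C" "d \<in> C" and l: "le a d" "le b d"
  have "j a d = d" "j b d = d" using l le_j C by auto
  then have "j (j a b) d = d" using j_assoc[of a b d] C by simp
  then show ?thesis using le_j[of "j a b" d] C j_in by simp
qed

lemma m_mono: "a \<in> C \<Longrightarrow> b \<in> C \<Longrightarrow> a' \<in> C \<Longrightarrow> b' \<in> C \<Longrightarrow> le a a' \<Longrightarrow> le b b' \<Longrightarrow> le (m a b) (m a' b')"
proof -
  assume C: "a \<in> C" "b \<in> C" "a' \<in> C" "b' \<in> C" and l: "le a a'" "le b b'"
  have "le (m a b) a'" using le_trans[of "m a b" a a'] le_m1[of a b] C l m_in by simp
  moreover have "le (m a b) b'" using le_trans[of "m a b" b b'] le_m2[of a b] C l m_in by simp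
  ultimately show ?thesis using le_meet[of a' b' "m a b"] C m_in by simp
qed

lemma j_mono: "a \<in> C \<Longrightarrow> b \<in> C \<Longrightarrow> a' \<in> C \<Longrightarrow> b' \<in> C \<Longrightarrow> le a a' \<Longrightarrow> le b b' \<Longrightarrow> le (j a b) (j a' b')"
proof -
  assume C: "a \<in> C" "b \<in> C" "a' \<in> C" "b' \<in> C" and l: "le a a'" "le b b'"
  have "le a (j a' b')" using le_trans[of a a' "j a' b'"] le_j1[of a' b'] C l j_in by simp
  moreover have "le b (j a' b')" using le_trans[of b b' "j a' b'"] le_j2[of a' b'] C l j_in by simp
  ultimately show ?thesis using le_join[of a b "j a' b'"] C j_in by simp
qed

lemma distr_j: "a \<in> C \<Longrightarrow> b \<in> C \<Longrightarrow> d \<in> C \<Longrightarrow> j a (m b d) = m (j a b) (j a d)"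
proof -
  assume C: "a \<in> C" "b \<in> C" "d \<in> C"
  have "m (j a b) (j a d) = j (m (j a b) a) (m (j a b) d)" using C distr j_in by simp
  also have "m (j a b) a = a" using C absorb1[of a b] m_comm[of "j a b" a] j_in by simp
  also have "m (j a b) d = j (m a d) (m b d)" using C distr2 by simp
  also have "j a (j (m a d) (m b d)) = j (j a (m a d)) (m b d)" using C j_assoc m_in by simp
  also have "j a (m a d) = a" using C absorb2 by simp
  finally show ?thesis by simp
qed

lemma sub_dlat:
  assumes "S \<subseteq> C" "z \<in> S" "u \<in> S" "\<And>a b. a \<in> S \<Longrightarrow> b \<in> S \<Longrightarrow> m a b \<in> S \<and> j a b \<in> S"
  shows "dlat S m j z u"
  apply unfold_locales
  using assms apply blast
  using assms apply blast
  using assms apply blast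
  using assms apply blast
  using assms(1) m_assoc apply blast
  using assms(1) j_assoc apply blast
  using assms(1) m_comm apply blast
  using assms(1) j_comm apply blast
  using assms(1) absorb1 apply blast
  using assms(1) absorb2 apply blast
  using assms(1) distr apply blast
  using assms(1) m_z apply blast
  using assms(1) j_u apply blast
  done

lemma restrict_prime:
  assumes "S \<subseteq> C" "z \<in> S" "u \<in> S" "\<And>a b. a \<in> S \<Longrightarrow> b \<in> S \<Longrightarrow> m a b \<in> S \<and> j a b \<in> S"
    and "primeF P"
  shows "dlat.primeF S m j z u (P \<inter> S)"
proof -
  interpret S: dlat S m j z u using sub_dlat assms(1-4) by blast
  show ?thesis using assms unfolding S.primeF_def primeF_def S.le_def le_def by blast
qed

lemma extend_prime:
  assumes SC: "S \<subseteq> C" and zS: "z \<in> S" and uS: "u \<in> S"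
    and Scl: "\<And>a b. a \<in> S \<Longrightarrow> b \<in> S \<Longrightarrow> m a b \<in> S \<and> j a b \<in> S"
    and Q: "dlat.primeF S m j z u Q"
  shows "\<exists>P. primeF P \<and> P \<inter> S = Q"
proof -
  interpret S: dlat S m j z u using sub_dlat SC zS uS Scl by blast
  have QS: "Q \<subseteq> S" and uQ: "u \<in> Q" and zQ: "z \<notin> Q"
    and Qup: "\<And>a b. a \<in> Q \<Longrightarrow> b \<in> S \<Longrightarrow> le a b \<Longrightarrow> b \<in> Q"
    and Qm: "\<And>a b. a \<in> Q \<Longrightarrow> b \<in> Q \<Longrightarrow> m a b \<in> Q"
    and Qp: "\<And>a b. a \<in> S \<Longrightarrow> b \<in> S \<Longrightarrow> j a b \<in> Q \<Longrightarrow> a \<in> Q \<or> b \<in> Q"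
    using Q unfolding S.primeF_def S.le_def le_def by blast+
  have QC: "q \<in> C" if "q \<in> Q" for q using that QS SC by blast
  have RC: "r \<in> C" if "r \<in> S" for r using that SC by blast
  define T where "T a b \<longleftrightarrow> (\<exists>q\<in>Q. \<exists>r\<in>S - Q. le (m q a) (j b r))" for a b
  have jR: "j r r' \<in> S - Q" if "r \<in> S - Q" "r' \<in> S - Q" for r r' using that Scl Qp by blast
  have mQ: "m q q' \<in> Q" if "q \<in> Q" "q' \<in> Q" for q q' using that Qm by blast
  have leT: "T a b" if "a \<in> C" "b \<in> C" "le a b" for a b
  proof -
    have "m u a = a" "j b z = b" using m_u j_z that by auto
    then have "le (m u a) (j b z)" using that by simp
    then show ?thesis unfolding T_def using uQ zS zQ by blast
  qed
  have trT: "T a d" if C: "a \<in> C" "b \<in> C" "d \<in> C" and h: "T a b" "T b d" for a b d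
  proof -
    obtain q r q' r' where q: "q \<in> Q" "r \<in> S - Q" "le (m q a) (j b r)"
      "q' \<in> Q" "r' \<in> S - Q" "le (m q' b) (j d r')" using h unfolding T_def by blast
    have C2: "q \<in> C" "q' \<in> C" "r \<in> C" "r' \<in> C" using q QC RC by auto
    have e1: "m (m q q') a = m q' (m q a)" using C C2 m_comm[of q q'] m_assoc[of q' q a] by simp
    have l2: "le (m q' (m q a)) (m q' (j b r))" using q C C2 m_mono le_refl m_in j_in by simp
    have e3: "m q' (j b r) = j (m q' b) (m q' r)" using distr C C2 by simp
    have l4: "le (j (m q' b) (m q' r)) (j (j d r') r)" using j_mono q(6) le_m2 C C2 m_in j_in by simp
    have e5: "j (j d r') r = j d (j r' r)" using j_assoc C C2 by simp
    have "le (m (m q q') a) (j d (j r' r))"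
      using le_trans[of "m q' (m q a)" "j (m q' b) (m q' r)" "j (j d r') r"] l2 l4 e1 e3 e5 C C2 m_in j_in by simp
    then show ?thesis unfolding T_def using mQ jR q by blast
  qed
  have mT: "T a (m b d)" if C: "a \<in> C" "b \<in> C" "d \<in> C" and h: "T a b" "T a d" for a b d
  proof -
    obtain q r q' r' where q: "q \<in> Q" "r \<in> S - Q" "le (m q a) (j b r)"
      "q' \<in> Q" "r' \<in> S - Q" "le (m q' a) (j d r')" using h unfolding T_def by blast
    have C2: "q \<in> C" "q' \<in> C" "r \<in> C" "r' \<in> C" using q QC RC by auto
    have "le (m (m q q') a) (m q a)" using m_mono le_m1 le_refl C C2 m_in by simp
    moreover have "le (j b r) (j b (j r r'))" using j_mono le_j1 le_refl C C2 j_in by simp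
    ultimately have 1: "le (m (m q q') a) (j b (j r r'))"
      using q(3) le_trans3[of "m (m q q') a" "m q a" "j b r" "j b (j r r')"] C C2 m_in j_in by simp
    have "le (m (m q q') a) (m q' a)" using m_mono le_m2 le_refl C C2 m_in by simp
    moreover have "le (j d r') (j d (j r r'))" using j_mono le_j2 le_refl C C2 j_in by simp
    ultimately have 2: "le (m (m q q') a) (j d (j r r'))"
      using q(6) le_trans3[of "m (m q q') a" "m q' a" "j d r'" "j d (j r r')"] C C2 m_in j_in by simp
    have "le (m (m q q') a) (m (j b (j r r')) (j d (j r r')))"
      using le_meet 1 2 C C2 m_in j_in by simp
    also have "m (j b (j r r')) (j d (j r r')) = j (m b d) (j r r')"
      using distr_j[of "j r r'" b d] j_comm[of "j r r'" b] j_comm[of "j r r'" d] j_comm[of "j r r'" "m b d"] C C2 j_in m_in by simp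
    finally show ?thesis unfolding T_def using mQ jR q by blast
  qed
  have jT: "T (j a b) d" if C: "a \<in> C" "b \<in> C" "d \<in> C" and h: "T a d" "T b d" for a b d
  proof -
    obtain q r q' r' where q: "q \<in> Q" "r \<in> S - Q" "le (m q a) (j d r)"
      "q' \<in> Q" "r' \<in> S - Q" "le (m q' b) (j d r')" using h unfolding T_def by blast
    have C2: "q \<in> C" "q' \<in> C" "r \<in> C" "r' \<in> C" using q QC RC by auto
    have "le (m (m q q') a) (m q a)" using m_mono le_m1 le_refl C C2 m_in by simp
    moreover have "le (j d r) (j d (j r r'))" using j_mono le_j1 le_refl C C2 j_in by simp
    ultimately have 1: "le (m (m q q') a) (j d (j r r'))"
      using q(3) le_trans3[of "m (m q q') a" "m q a" "j d r" "j d (j r r')"] C C2 m_in j_in by simp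
    have "le (m (m q q') b) (m q' b)" using m_mono le_m2 le_refl C C2 m_in by simp
    moreover have "le (j d r') (j d (j r r'))" using j_mono le_j2 le_refl C C2 j_in by simp
    ultimately have 2: "le (m (m q q') b) (j d (j r r'))"
      using q(6) le_trans3[of "m (m q q') b" "m q' b" "j d r'" "j d (j r r')"] C C2 m_in j_in by simp
    have "m (m q q') (j a b) = j (m (m q q') a) (m (m q q') b)" using distr C C2 m_in by simp
    also have "le (j (m (m q q') a) (m (m q q') b)) (j d (j r r'))"
      using le_join 1 2 C C2 m_in j_in by simp
    finally show ?thesis unfolding T_def using mQ jR q by blast
  qed
  have nT: "\<not> T u z"
  proof
    assume "T u z"
    then obtain q r where q: "q \<in> Q" "r \<in> S - Q" "le (m q u) (j z r)" unfolding T_def by blast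
    have qr: "q \<in> C" "r \<in> C" using q QC RC by auto
    have "m q u = q" "j z r = r" using m_comm[OF qr(1) u_in] m_u[OF qr(1)] j_comm[OF z_in qr(2)] j_z[OF qr(2)] by auto
    then show False using q Qup by auto
  qed
  have "\<exists>P. primeF P \<and> u \<in> P \<and> z \<notin> P \<and> (\<forall>a\<in>P. \<forall>b\<in>C. T a b \<longrightarrow> b \<in> P)"
    apply (rule T_prime)
    subgoal by (rule leT)
    subgoal by (rule trT)
    subgoal by (rule mT)
    subgoal by (rule jT)
    by (rule u_in z_in nT)+
  then obtain P where P: "primeF P" "u \<in> P" "z \<notin> P" and Pcl: "\<forall>a\<in>P. \<forall>b\<in>C. T a b \<longrightarrow> b \<in> P"
    by blast
  have "Q \<subseteq> P"
  proof
    fix q assume q: "q \<in> Q"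
    have qC: "q \<in> C" using q QC by blast
    have "m q u = q" using m_comm[OF qC u_in] m_u[OF qC] by simp
    moreover have "j q z = q" using j_z[OF qC] .
    ultimately have "le (m q u) (j q z)" using le_refl[OF qC] by simp
    then have "T u q" unfolding T_def using q zS zQ by blast
    then show "q \<in> P" using Pcl P QC q by blast
  qed
  moreover have "r \<notin> P" if "r \<in> S - Q" for r
  proof
    assume "r \<in> P"
    have rC: "r \<in> C" using that RC by blast
    have "m u r = r" using m_u[OF rC] .
    moreover have "j z r = r" using j_comm[OF z_in rC] j_z[OF rC] by simp
    ultimately have "le (m u r) (j z r)" using le_refl[OF rC] by simp
    then have "T r z" unfolding T_def using that uQ by blast
    then show False using Pcl \<open>r \<in> P\<close> P z_in by blast
  qed
  ultimately have "P \<inter> S = Q" using QS by blast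
  then show ?thesis using P by blast
qed

end

locale whb = dlat +
  fixes i c :: "'a \<Rightarrow> 'a \<Rightarrow> 'a"
  assumes i_in: "\<And>a b. a \<in> C \<Longrightarrow> b \<in> C \<Longrightarrow> i a b \<in> C"
    and c_in: "\<And>a b. a \<in> C \<Longrightarrow> b \<in> C \<Longrightarrow> c a b \<in> C"
    and i_refl: "\<And>a. a \<in> C \<Longrightarrow> i a a = u"
    and i_meet: "\<And>a b d. a \<in> C \<Longrightarrow> b \<in> C \<Longrightarrow> d \<in> C \<Longrightarrow> i a (m b d) = m (i a b) (i a d)"
    and i_join: "\<And>a b d. a \<in> C \<Longrightarrow> b \<in> C \<Longrightarrow> d \<in> C \<Longrightarrow> i (j a b) d = m (i a d) (i b d)"
    and i_trans0: "\<And>a b d. a \<in> C \<Longrightarrow> b \<in> C \<Longrightarrow> d \<in> C \<Longrightarrow> m (m (i a b) (i b d)) (i a d) = m (i a b) (i b d)"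
    and c_refl: "\<And>a. a \<in> C \<Longrightarrow> c a a = z"
    and c_join: "\<And>a b d. a \<in> C \<Longrightarrow> b \<in> C \<Longrightarrow> d \<in> C \<Longrightarrow> c (j a b) d = j (c a d) (c b d)"
    and c_meet: "\<And>a b d. a \<in> C \<Longrightarrow> b \<in> C \<Longrightarrow> d \<in> C \<Longrightarrow> c a (m b d) = j (c a b) (c a d)"
    and c_trans0: "\<And>a b d. a \<in> C \<Longrightarrow> b \<in> C \<Longrightarrow> d \<in> C \<Longrightarrow> m (c a d) (j (c a b) (c b d)) = c a d"
begin

lemma i_trans: "a \<in> C \<Longrightarrow> b \<in> C \<Longrightarrow> d \<in> C \<Longrightarrow> le (m (i a b) (i b d)) (i a d)"
  unfolding le_def by (rule i_trans0)

lemma c_trans: "a \<in> C \<Longrightarrow> b \<in> C \<Longrightarrow> d \<in> C \<Longrightarrow> le (c a d) (j (c a b) (c b d))"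
  unfolding le_def by (rule c_trans0)

lemma pf_up: "primeF P \<Longrightarrow> a \<in> P \<Longrightarrow> b \<in> C \<Longrightarrow> le a b \<Longrightarrow> b \<in> P"
  unfolding primeF_def by blast

lemma pf_m: "primeF P \<Longrightarrow> a \<in> C \<Longrightarrow> b \<in> C \<Longrightarrow> m a b \<in> P \<longleftrightarrow> a \<in> P \<and> b \<in> P"
proof -
  assume P: "primeF P" and C: "a \<in> C" "b \<in> C"
  show ?thesis
  proof
    assume "m a b \<in> P"
    then show "a \<in> P \<and> b \<in> P" using pf_up[OF P, of "m a b" a] pf_up[OF P, of "m a b" b] le_m1[of a b] le_m2[of a b] C by simp
  next
    assume "a \<in> P \<and> b \<in> P"
    then show "m a b \<in> P" using P unfolding primeF_def by blast
  qed
qed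

lemma pf_j: "primeF P \<Longrightarrow> a \<in> C \<Longrightarrow> b \<in> C \<Longrightarrow> j a b \<in> P \<longleftrightarrow> a \<in> P \<or> b \<in> P"
proof -
  assume P: "primeF P" and C: "a \<in> C" "b \<in> C"
  show ?thesis
  proof
    assume "j a b \<in> P"
    then show "a \<in> P \<or> b \<in> P" using P C unfolding primeF_def by blast
  next
    assume "a \<in> P \<or> b \<in> P"
    then show "j a b \<in> P" using pf_up[OF P, of a "j a b"] pf_up[OF P, of b "j a b"] le_j1[of a b] le_j2[of a b] C j_in by auto
  qed
qed

lemma pf_u: "primeF P \<Longrightarrow> u \<in> P" unfolding primeF_def by blast
lemma pf_z: "primeF P \<Longrightarrow> z \<notin> P" unfolding primeF_def by blast
lemma pf_C: "primeF P \<Longrightarrow> P \<subseteq> C" unfolding primeF_def by blast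

lemma imp_witness:
  assumes P: "primeF P" and x: "x \<in> C" and y: "y \<in> C" and n: "i x y \<notin> P"
  shows "\<exists>Q. primeF Q \<and> x \<in> Q \<and> y \<notin> Q \<and> (\<forall>a\<in>Q. \<forall>b\<in>C. i a b \<in> P \<longrightarrow> b \<in> Q)"
proof -
  define T where "T a b \<longleftrightarrow> i a b \<in> P" for a b
  have leT: "T a b" if "a \<in> C" "b \<in> C" "le a b" for a b
  proof -
    have "i a a = i a (m a b)" using that unfolding le_def by simp
    also have "\<dots> = m u (i a b)" using i_meet[of a a b] i_refl[of a] that by simp
    also have "\<dots> = i a b" using m_u[of "i a b"] i_in that by simp
    finally have "i a b = u" using i_refl that by simp
    then show ?thesis unfolding T_def using pf_u[OF P] by simp
  qed
  have trT: "T a d" if "a \<in> C" "b \<in> C" "d \<in> C" "T a b" "T b d" for a b d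
  proof -
    have "m (i a b) (i b d) \<in> P" using pf_m[OF P, of "i a b" "i b d"] i_in that unfolding T_def by simp
    then show ?thesis unfolding T_def using pf_up[OF P, of "m (i a b) (i b d)" "i a d"] i_trans[of a b d] that i_in by simp
  qed
  have mT: "T a (m b d)" if "a \<in> C" "b \<in> C" "d \<in> C" "T a b" "T a d" for a b d
    using that pf_m[OF P, of "i a b" "i a d"] i_meet[of a b d] i_in unfolding T_def by simp
  have jT: "T (j a b) d" if "a \<in> C" "b \<in> C" "d \<in> C" "T a d" "T b d" for a b d
    using that pf_m[OF P, of "i a d" "i b d"] i_join[of a b d] i_in unfolding T_def by simp
  have "\<exists>Q. primeF Q \<and> x \<in> Q \<and> y \<notin> Q \<and> (\<forall>a\<in>Q. \<forall>b\<in>C. T a b \<longrightarrow> b \<in> Q)"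
    apply (rule T_prime)
    subgoal by (rule leT)
    subgoal by (rule trT)
    subgoal by (rule mT)
    subgoal by (rule jT)
    subgoal by (rule x)
    subgoal by (rule y)
    subgoal using n unfolding T_def .
    done
  then show ?thesis unfolding T_def .
qed

lemma coimp_witness:
  assumes P: "primeF P" and x: "x \<in> C" and y: "y \<in> C" and n: "c x y \<in> P"
  shows "\<exists>Q. primeF Q \<and> x \<in> Q \<and> y \<notin> Q \<and> (\<forall>a\<in>Q. \<forall>b\<in>C. c a b \<notin> P \<longrightarrow> b \<in> Q)"
proof -
  define T where "T a b \<longleftrightarrow> c a b \<notin> P" for a b
  have leT: "T a b" if "a \<in> C" "b \<in> C" "le a b" for a b
  proof -
    have jab: "j a b = b" using le_j that by simp
    have "z = c b b" using c_refl[of b] that by simp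
    also have "\<dots> = c (j a b) b" using jab by simp
    also have "\<dots> = j (c a b) z" using c_join[of a b b] c_refl[of b] that by simp
    also have "\<dots> = c a b" using j_z[of "c a b"] c_in that by simp
    finally have "c a b = z" by simp
    then show ?thesis unfolding T_def using pf_z[OF P] by simp
  qed
  have trT: "T a d" if "a \<in> C" "b \<in> C" "d \<in> C" "T a b" "T b d" for a b d
  proof -
    have "j (c a b) (c b d) \<notin> P" using pf_j[OF P, of "c a b" "c b d"] c_in that unfolding T_def by simp
    then show ?thesis unfolding T_def using pf_up[OF P, of "c a d" "j (c a b) (c b d)"] c_trans[of a b d] that c_in j_in by auto
  qed
  have mT: "T a (m b d)" if "a \<in> C" "b \<in> C" "d \<in> C" "T a b" "T a d" for a b d
    using that pf_j[OF P, of "c a b" "c a d"] c_meet[of a b d] c_in unfolding T_def by simp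
  have jT: "T (j a b) d" if "a \<in> C" "b \<in> C" "d \<in> C" "T a d" "T b d" for a b d
    using that pf_j[OF P, of "c a d" "c b d"] c_join[of a b d] c_in unfolding T_def by simp
  have "\<exists>Q. primeF Q \<and> x \<in> Q \<and> y \<notin> Q \<and> (\<forall>a\<in>Q. \<forall>b\<in>C. T a b \<longrightarrow> b \<in> Q)"
    apply (rule T_prime)
    subgoal by (rule leT)
    subgoal by (rule trT)
    subgoal by (rule mT)
    subgoal by (rule jT)
    subgoal by (rule x)
    subgoal by (rule y)
    subgoal using n unfolding T_def by simp
    done
  then show ?thesis unfolding T_def .
qed

end



lemma whb_interp: "WHB_algebra B \<Longrightarrow> whb (carrier B) (mt B) (jn B) (bot B) (top B) (imp B) (coimp B)"
  apply unfold_locales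
  unfolding WHB_algebra_def Let_def whb_le_def by blast+

theorem corollary6p28:
  fixes B :: "('a, 'b) whb_alg_scheme" and A :: "'a set" and \<delta> :: "('a \<times> 'a) set"
  assumes "WHB_algebra B"
    and "subuniverse A B"
    and "congruence_on A B \<delta>"
  shows "\<exists>\<theta>. congruence_on (carrier B) B \<theta> \<and> \<delta> = \<theta> \<inter> (A \<times> A)"
proof -
  interpret W: whb "carrier B" "mt B" "jn B" "bot B" "top B" "imp B" "coimp B"
    using whb_interp[OF assms(1)] .
  have AC: "A \<subseteq> carrier B" and zA: "bot B \<in> A" and uA: "top B \<in> A"
    and Acl: "\<And>a b. a \<in> A \<Longrightarrow> b \<in> A \<Longrightarrow> mt B a b \<in> A \<and> jn B a b \<in> A"
    using assms(2) unfolding subuniverse_def by blast+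
  interpret AL: dlat A "mt B" "jn B" "bot B" "top B" using W.sub_dlat[OF AC zA uA Acl] .
  have eqv: "equiv A \<delta>" using assms(3) unfolding congruence_on_def by blast
  have cmp: "\<And>a b a' b'. (a, a') \<in> \<delta> \<Longrightarrow> (b, b') \<in> \<delta> \<Longrightarrow>
        (mt B a b, mt B a' b') \<in> \<delta> \<and> (jn B a b, jn B a' b') \<in> \<delta> \<and>
        (imp B a b, imp B a' b') \<in> \<delta> \<and> (coimp B a b, coimp B a' b') \<in> \<delta>"
    using assms(3) unfolding congruence_on_def by blast
  have dA: "a \<in> A \<and> b \<in> A" if "(a, b) \<in> \<delta>" for a b
    using eqv that unfolding equiv_def refl_on_def by blast
  have drefl: "(a, a) \<in> \<delta>" if "a \<in> A" for a
    using eqv that unfolding equiv_def refl_on_def by blast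
  have dsym: "(b, a) \<in> \<delta>" if "(a, b) \<in> \<delta>" for a b
    using eqv that unfolding equiv_def sym_def by blast
  have dtrans: "(a, d) \<in> \<delta>" if "(a, b) \<in> \<delta>" "(b, d) \<in> \<delta>" for a b d
    using eqv that unfolding equiv_def trans_def by blast
  define YA where "YA = {Q. AL.primeF Q \<and> (\<forall>a a'. (a, a') \<in> \<delta> \<longrightarrow> a \<in> Q \<longrightarrow> a' \<in> Q)}"
  define YB where "YB = {P. W.primeF P \<and> P \<inter> A \<in> YA}"
  define \<theta> where "\<theta> = {(x, y). x \<in> carrier B \<and> y \<in> carrier B \<and> (\<forall>P\<in>YB. x \<in> P \<longleftrightarrow> y \<in> P)}"
  have satP: "a \<in> P \<longleftrightarrow> a' \<in> P" if P: "P \<in> YB" and d: "(a, a') \<in> \<delta>" for P a a'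
  proof -
    have s: "\<forall>a a'. (a, a') \<in> \<delta> \<longrightarrow> a \<in> P \<inter> A \<longrightarrow> a' \<in> P \<inter> A"
      using P unfolding YB_def YA_def by blast
    show ?thesis using s d dsym[OF d] dA[OF d] by blast
  qed
  have YBp: "W.primeF P" if "P \<in> YB" for P using that unfolding YB_def by blast
  have Yi: "Q \<in> YB" if P: "P \<in> YB" and Q: "W.primeF Q"
    and Qcl: "\<forall>a\<in>Q. \<forall>b\<in>carrier B. imp B a b \<in> P \<longrightarrow> b \<in> Q" for P Q
  proof -
    have AQ: "AL.primeF (Q \<inter> A)" using W.restrict_prime[OF AC zA uA Acl Q] .
    have "e' \<in> Q \<inter> A" if e: "(e, e') \<in> \<delta>" "e \<in> Q \<inter> A" for e e'
    proof -
      have eA: "e \<in> A" "e' \<in> A" using dA[OF e(1)] by auto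
      have "(imp B e e', imp B e' e') \<in> \<delta>" using cmp[OF e(1) drefl[OF eA(2)]] by blast
      moreover have "imp B e' e' = top B" using W.i_refl eA AC by blast
      ultimately have "imp B e e' \<in> P \<longleftrightarrow> top B \<in> P" using satP[OF P] by simp
      then have "imp B e e' \<in> P" using W.pf_u YBp[OF P] by blast
      then show ?thesis using Qcl e eA AC by blast
    qed
    then have "Q \<inter> A \<in> YA" unfolding YA_def using AQ by blast
    then show ?thesis unfolding YB_def using Q by blast
  qed
  have Yc: "Q \<in> YB" if P: "P \<in> YB" and Q: "W.primeF Q"
    and Qcl: "\<forall>a\<in>Q. \<forall>b\<in>carrier B. coimp B a b \<notin> P \<longrightarrow> b \<in> Q" for P Q
  proof -
    have AQ: "AL.primeF (Q \<inter> A)" using W.restrict_prime[OF AC zA uA Acl Q] .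
    have "e' \<in> Q \<inter> A" if e: "(e, e') \<in> \<delta>" "e \<in> Q \<inter> A" for e e'
    proof -
      have eA: "e \<in> A" "e' \<in> A" using dA[OF e(1)] by auto
      have "(coimp B e e', coimp B e' e') \<in> \<delta>" using cmp[OF e(1) drefl[OF eA(2)]] by blast
      moreover have "coimp B e' e' = bot B" using W.c_refl eA AC by blast
      ultimately have "coimp B e e' \<in> P \<longleftrightarrow> bot B \<in> P" using satP[OF P] by simp
      then have "coimp B e e' \<notin> P" using W.pf_z YBp[OF P] by blast
      then show ?thesis using Qcl e eA AC by blast
    qed
    then have "Q \<inter> A \<in> YA" unfolding YA_def using AQ by blast
    then show ?thesis unfolding YB_def using Q by blast
  qed
  have thC: "x \<in> carrier B \<and> y \<in> carrier B" if "(x, y) \<in> \<theta>" for x y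
    using that unfolding \<theta>_def by blast
  have thP: "x \<in> P \<longleftrightarrow> y \<in> P" if "(x, y) \<in> \<theta>" "P \<in> YB" for x y P
    using that unfolding \<theta>_def by blast
  have thI: "(x, y) \<in> \<theta>" if "x \<in> carrier B" "y \<in> carrier B" "\<And>P. P \<in> YB \<Longrightarrow> x \<in> P \<longleftrightarrow> y \<in> P" for x y
    using that unfolding \<theta>_def by blast
  have thsym: "(y, x) \<in> \<theta>" if "(x, y) \<in> \<theta>" for x y
    using that unfolding \<theta>_def by blast
  have impl: "imp B x' y' \<notin> P" if h: "(x, x') \<in> \<theta>" "(y, y') \<in> \<theta>" "P \<in> YB" "imp B x y \<notin> P" for x x' y y' P
  proof -
    have C: "x \<in> carrier B" "x' \<in> carrier B" "y \<in> carrier B" "y' \<in> carrier B" using thC h by auto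
    obtain Q where Q: "W.primeF Q" "x \<in> Q" "y \<notin> Q" and Qcl: "\<forall>a\<in>Q. \<forall>b\<in>carrier B. imp B a b \<in> P \<longrightarrow> b \<in> Q"
      using W.imp_witness[OF YBp[OF h(3)] C(1) C(3) h(4)] by blast
    have "Q \<in> YB" using Yi[OF h(3) Q(1) Qcl] .
    then have "x' \<in> Q" "y' \<notin> Q" using thP h Q by blast+
    then show ?thesis using Qcl C by blast
  qed
  have coimpl: "coimp B x' y' \<in> P" if h: "(x, x') \<in> \<theta>" "(y, y') \<in> \<theta>" "P \<in> YB" "coimp B x y \<in> P" for x x' y y' P
  proof -
    have C: "x \<in> carrier B" "x' \<in> carrier B" "y \<in> carrier B" "y' \<in> carrier B" using thC h by auto
    obtain Q where Q: "W.primeF Q" "x \<in> Q" "y \<notin> Q" and Qcl: "\<forall>a\<in>Q. \<forall>b\<in>carrier B. coimp B a b \<notin> P \<longrightarrow> b \<in> Q"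
      using W.coimp_witness[OF YBp[OF h(3)] C(1) C(3) h(4)] by blast
    have "Q \<in> YB" using Yc[OF h(3) Q(1) Qcl] .
    then have "x' \<in> Q" "y' \<notin> Q" using thP h Q by blast+
    then show ?thesis using Qcl C by blast
  qed
  have equivB: "equiv (carrier B) \<theta>"
    unfolding equiv_def refl_on_def sym_def trans_def \<theta>_def by auto
  have compB: "(mt B a b, mt B a' b') \<in> \<theta> \<and> (jn B a b, jn B a' b') \<in> \<theta> \<and>
        (imp B a b, imp B a' b') \<in> \<theta> \<and> (coimp B a b, coimp B a' b') \<in> \<theta>"
    if ha: "(a, a') \<in> \<theta>" and hb: "(b, b') \<in> \<theta>" for a b a' b'
  proof -
    have C: "a \<in> carrier B" "a' \<in> carrier B" "b \<in> carrier B" "b' \<in> carrier B" using thC ha hb by auto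
    have m1: "(mt B a b, mt B a' b') \<in> \<theta>"
    proof (rule thI)
      show "mt B a b \<in> carrier B" "mt B a' b' \<in> carrier B" using C W.m_in by auto
      fix P assume P: "P \<in> YB"
      show "mt B a b \<in> P \<longleftrightarrow> mt B a' b' \<in> P"
        using W.pf_m[OF YBp[OF P]] C thP[OF ha P] thP[OF hb P] by simp
    qed
    have j1: "(jn B a b, jn B a' b') \<in> \<theta>"
    proof (rule thI)
      show "jn B a b \<in> carrier B" "jn B a' b' \<in> carrier B" using C W.j_in by auto
      fix P assume P: "P \<in> YB"
      show "jn B a b \<in> P \<longleftrightarrow> jn B a' b' \<in> P"
        using W.pf_j[OF YBp[OF P]] C thP[OF ha P] thP[OF hb P] by simp
    qed
    have i1: "(imp B a b, imp B a' b') \<in> \<theta>"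
    proof (rule thI)
      show "imp B a b \<in> carrier B" "imp B a' b' \<in> carrier B" using C W.i_in by auto
      fix P assume P: "P \<in> YB"
      show "imp B a b \<in> P \<longleftrightarrow> imp B a' b' \<in> P"
        using impl[OF ha hb P] impl[OF thsym[OF ha] thsym[OF hb] P] by blast
    qed
    have c1: "(coimp B a b, coimp B a' b') \<in> \<theta>"
    proof (rule thI)
      show "coimp B a b \<in> carrier B" "coimp B a' b' \<in> carrier B" using C W.c_in by auto
      fix P assume P: "P \<in> YB"
      show "coimp B a b \<in> P \<longleftrightarrow> coimp B a' b' \<in> P"
        using coimpl[OF ha hb P] coimpl[OF thsym[OF ha] thsym[OF hb] P] by blast
    qed
    show ?thesis using m1 j1 i1 c1 by blast
  qed
  have sep: "\<exists>P\<in>YB. x \<in> P \<and> y \<notin> P" if x: "x \<in> A" and y: "y \<in> A" and n: "(mt B x y, x) \<notin> \<delta>" for x y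
  proof -
    define T where "T a b \<longleftrightarrow> (mt B a b, a) \<in> \<delta>" for a b
    have leT: "T a b" if "a \<in> A" "b \<in> A" "W.le a b" for a b
      using that drefl unfolding T_def W.le_def by simp
    have trT: "T a d" if C: "a \<in> A" "b \<in> A" "d \<in> A" and h: "T a b" "T b d" for a b d
    proof -
      have h1: "(mt B a b, a) \<in> \<delta>" "(mt B b d, b) \<in> \<delta>" using h unfolding T_def by auto
      have s1: "(mt B a (mt B b d), mt B a b) \<in> \<delta>" using cmp[OF drefl[OF C(1)] h1(2)] by blast
      have s2: "(mt B (mt B a b) d, mt B a d) \<in> \<delta>" using cmp[OF h1(1) drefl[OF C(3)]] by blast
      have e: "mt B (mt B a b) d = mt B a (mt B b d)" using AL.m_assoc C by blast
      have "(mt B a d, mt B a b) \<in> \<delta>" using dtrans[OF dsym[OF s2]] s1 e by simp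
      then have "(mt B a d, a) \<in> \<delta>" using dtrans h1(1) by blast
      then show ?thesis unfolding T_def .
    qed
    have mT: "T a (mt B b d)" if C: "a \<in> A" "b \<in> A" "d \<in> A" and h: "T a b" "T a d" for a b d
    proof -
      have h1: "(mt B a b, a) \<in> \<delta>" "(mt B a d, a) \<in> \<delta>" using h unfolding T_def by auto
      have "(mt B (mt B a b) (mt B a d), mt B a a) \<in> \<delta>" using cmp[OF h1] by blast
      moreover have "mt B a a = a" using AL.m_idem C by blast
      moreover have "mt B (mt B a b) (mt B a d) = mt B a (mt B b d)" using AL.m_ac C by blast
      ultimately show ?thesis unfolding T_def by simp
    qed
    have jT: "T (jn B a b) d" if C: "a \<in> A" "b \<in> A" "d \<in> A" and h: "T a d" "T b d" for a b d
    proof -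
      have h1: "(mt B a d, a) \<in> \<delta>" "(mt B b d, b) \<in> \<delta>" using h unfolding T_def by auto
      have "(jn B (mt B a d) (mt B b d), jn B a b) \<in> \<delta>" using cmp[OF h1] by blast
      moreover have "mt B (jn B a b) d = jn B (mt B a d) (mt B b d)" using AL.distr2 C by blast
      ultimately show ?thesis unfolding T_def by simp
    qed
    have "\<exists>Q. AL.primeF Q \<and> x \<in> Q \<and> y \<notin> Q \<and> (\<forall>a\<in>Q. \<forall>b\<in>A. T a b \<longrightarrow> b \<in> Q)"
      apply (rule AL.T_prime)
      subgoal by (rule leT)
      subgoal by (rule trT)
      subgoal by (rule mT)
      subgoal by (rule jT)
      subgoal by (rule x)
      subgoal by (rule y)
      subgoal using n unfolding T_def .
      done
    then obtain Q where Q: "AL.primeF Q" "x \<in> Q" "y \<notin> Q" and Qcl: "\<forall>a\<in>Q. \<forall>b\<in>A. T a b \<longrightarrow> b \<in> Q"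
      by blast
    have "e' \<in> Q" if e: "(e, e') \<in> \<delta>" "e \<in> Q" for e e'
    proof -
      have eA: "e \<in> A" "e' \<in> A" using dA[OF e(1)] by auto
      have "(mt B e e, mt B e e') \<in> \<delta>" using cmp[OF drefl[OF eA(1)] e(1)] by blast
      moreover have "mt B e e = e" using AL.m_idem eA by blast
      ultimately have "T e e'" unfolding T_def using dsym by simp
      then show ?thesis using Qcl e eA by blast
    qed
    then have QY: "Q \<in> YA" unfolding YA_def using Q(1) by blast
    obtain P where P: "W.primeF P" "P \<inter> A = Q"
      using W.extend_prime[OF AC zA uA Acl Q(1)] by blast
    have "P \<in> YB" unfolding YB_def using P QY by blast
    moreover have "x \<in> P" "y \<notin> P" using P Q x y by blast+
    ultimately show ?thesis by blast
  qed
  have "\<delta> = \<theta> \<inter> (A \<times> A)"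
  proof
    show "\<delta> \<subseteq> \<theta> \<inter> (A \<times> A)"
    proof
      fix p assume "p \<in> \<delta>"
      then obtain a a' where p: "p = (a, a')" "(a, a') \<in> \<delta>" by (cases p) auto
      have "(a, a') \<in> \<theta>" using thI dA[OF p(2)] AC satP[OF _ p(2)] by blast
      then show "p \<in> \<theta> \<inter> (A \<times> A)" using p dA by blast
    qed
  next
    show "\<theta> \<inter> (A \<times> A) \<subseteq> \<delta>"
    proof
      fix p assume "p \<in> \<theta> \<inter> (A \<times> A)"
      then obtain a a' where p: "p = (a, a')" "(a, a') \<in> \<theta>" "a \<in> A" "a' \<in> A" by (cases p) auto
      show "p \<in> \<delta>"
      proof (rule ccontr)
        assume nd: "p \<notin> \<delta>"
        show False
        proof (cases "(mt B a a', a) \<in> \<delta>")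
          case False
          then obtain P where "P \<in> YB" "a \<in> P" "a' \<notin> P" using sep p by blast
          then show False using thP p by blast
        next
          case True
          have "(mt B a' a, a') \<notin> \<delta>"
          proof
            assume h: "(mt B a' a, a') \<in> \<delta>"
            have "mt B a' a = mt B a a'" using AL.m_comm p by blast
            then have "(a, a') \<in> \<delta>" using dtrans[OF dsym[OF True]] h by simp
            then show False using nd p by blast
          qed
          then obtain P where "P \<in> YB" "a' \<in> P" "a \<notin> P" using sep p by blast
          then show False using thP p by blast
        qed
      qed
    qed
  qed
  moreover have "congruence_on (carrier B) B \<theta>"
    unfolding congruence_on_def using equivB compB by blast
  ultimately show ?thesis by blast
qed

end
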